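(* Let $t\ge 2$, $k\ge 1$, and let $C$ be a binary linear $t$-CIS $[tk,k]$ code with generator matrix $G=(A_1\ A_2\ \cdots\ A_t)$, where each $A_j$ is an invertible $k\times k$ matrix over $\mathbb{F}_2$; let $A_j(\mathbf r_i)$ denote the $i$-th row of $A_j$. Let $\mathbf x_1,\dots,\mathbf x_t\in\mathbb{F}_2^k$ and $y_{ij}\in\mathbb{F}_2$ ($1\le i\le k$, $1\le j\le t$) be arbitrary. For each $j$, let $c_{1j},\dots,c_{kj}\in\mathbb{F}_2$ be the unique elements with $\mathbf x_j=\sum_{i=1}^k c_{ij}A_j(\mathbf r_i)$, and set $z_j=1+\sum_{i=1}^k c_{ij}y_{ij}$. Then the $(k+1)\times t(k+1)$ matrix $$G_1=\begin{pmatrix} z_1 & \mathbf x_1 & z_2 & \mathbf x_2 & \cdots & z_t & \mathbf x_t\\ y_{11} & A_1(\mathbf r_1) & y_{12} & A_2(\mathbf r_1) & \cdots & y_{1t} & A_t(\mathbf r_1)\\ \vdots & \vdots & \vdots & \vdots & & \vdots & \vdots\\ y_{k1} & A_1(\mathbf r_k) & y_{k2} & A_2(\mathbf r_k) & \cdots & y_{kt} & A_t(\mathbf r_k)\end{pmatrix}$$ generates a binary linear $t$-CIS $[t(k+1),k+1]$ code.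
   Context: A binary linear $[tk,k]$ code is $t$-CIS if its coordinate set can be partitioned into $t$ pairwise disjoint information sets, an information set being a set of $k$ coordinates whose columns in a generator matrix are linearly independent. *)

theory Defs
  imports Main "HOL-Library.Z2"
begin

text \<open>Matrices over F_2 (type bit) are functions nat => nat => bit, with
  row index first; only entries inside the stated bounds are relevant.
  Indices are 0-based.\<close>

definition rows_indep :: "nat \<Rightarrow> nat \<Rightarrow> (nat \<Rightarrow> nat \<Rightarrow> bit) \<Rightarrow> bool" where
  "rows_indep m n M \<longleftrightarrow>
     (\<forall>c :: nat \<Rightarrow> bit. (\<forall>l<n. (\<Sum>i<m. c i * M i l) = 0) \<longrightarrow> (\<forall>i<m. c i = 0))"

definition cols_indep :: "nat \<Rightarrow> (nat \<Rightarrow> nat \<Rightarrow> bit) \<Rightarrow> nat set \<Rightarrow> bool" where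
  "cols_indep m M S \<longleftrightarrow>
     (\<forall>c :: nat \<Rightarrow> bit. (\<forall>i<m. (\<Sum>l\<in>S. c l * M i l) = 0) \<longrightarrow> (\<forall>l\<in>S. c l = 0))"

definition info_set :: "nat \<Rightarrow> nat \<Rightarrow> (nat \<Rightarrow> nat \<Rightarrow> bit) \<Rightarrow> nat set \<Rightarrow> bool" where
  "info_set k n G S \<longleftrightarrow> S \<subseteq> {..<n} \<and> card S = k \<and> cols_indep k G S"

definition CIS_code :: "nat \<Rightarrow> nat \<Rightarrow> (nat \<Rightarrow> nat \<Rightarrow> bit) \<Rightarrow> bool" where
  "CIS_code t k G \<longleftrightarrow> rows_indep k (t * k) G \<and>
     (\<exists>I :: nat \<Rightarrow> nat set.
        (\<forall>j<t. info_set k (t * k) G (I j)) \<and>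
        (\<forall>j<t. \<forall>j'<t. j \<noteq> j' \<longrightarrow> I j \<inter> I j' = {}) \<and>
        (\<Union>j<t. I j) = {..<t * k})"

definition mat_invertible :: "nat \<Rightarrow> (nat \<Rightarrow> nat \<Rightarrow> bit) \<Rightarrow> bool" where
  "mat_invertible k M \<longleftrightarrow> (\<exists>B :: nat \<Rightarrow> nat \<Rightarrow> bit.
      (\<forall>i<k. \<forall>l<k. (\<Sum>m<k. B i m * M m l) = (if i = l then 1 else 0)) \<and>
      (\<forall>i<k. \<forall>l<k. (\<Sum>m<k. M i m * B m l) = (if i = l then 1 else 0)))"

definition block_gen :: "nat \<Rightarrow> (nat \<Rightarrow> nat \<Rightarrow> nat \<Rightarrow> bit) \<Rightarrow> nat \<Rightarrow> nat \<Rightarrow> bit" where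
  "block_gen k A = (\<lambda>i col. A (col div k) i (col mod k))"

text \<open>The extended (k+1) x t(k+1) matrix G_1: block j occupies columns
  j*(k+1) .. j*(k+1)+k; its first column is (z_j, y_{0j}, ..., y_{(k-1)j})^T,
  the remaining columns form (x_j ; A_j).\<close>
definition ext_gen :: "nat \<Rightarrow> (nat \<Rightarrow> bit) \<Rightarrow> (nat \<Rightarrow> nat \<Rightarrow> bit) \<Rightarrow> (nat \<Rightarrow> nat \<Rightarrow> bit)
    \<Rightarrow> (nat \<Rightarrow> nat \<Rightarrow> nat \<Rightarrow> bit) \<Rightarrow> nat \<Rightarrow> nat \<Rightarrow> bit" where
  "ext_gen k z x y A = (\<lambda>r col.
     (let j = col div (k + 1); p = col mod (k + 1) in
      if r = 0 then (if p = 0 then z j else x j (p - 1))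
      else (if p = 0 then y (r - 1) j else A j (r - 1) (p - 1))))"

end

theory Submission
  imports Defs
begin

lemma bit_add_self [simp]: "(a::bit) + a = 0"
  by (metis diff_self minus_bit_def)

lemma bit_add_self2 [simp]: "(a::bit) + (a + b) = b"
  by (metis add.assoc add_0 bit_add_self)

lemma swap_gen: fixes w :: "nat \<Rightarrow> 'a::comm_semiring_1"
  shows "(\<Sum>i<k. w i * (\<Sum>m<n. P i m * Q m)) = (\<Sum>m<n. (\<Sum>i<k. w i * P i m) * Q m)"
  by (simp add: sum_distrib_left sum_distrib_right mult_ac sum.swap[of _ "{..<k}" "{..<n}"])

lemma swap_gen2: fixes B :: "nat \<Rightarrow> nat \<Rightarrow> 'a::comm_semiring_1"
  shows "(\<Sum>q<k. (\<Sum>m<n. B l m * Am m q) * d' q) = (\<Sum>m<n. B l m * (\<Sum>q<k. d' q * Am m q))"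
  by (simp add: sum_distrib_left sum_distrib_right mult_ac sum.swap[of _ "{..<k}" "{..<n}"])

lemma bit_arith1: "(d::bit) * (1 + Y) + S + (d * Y + S) = d"
proof -
  have "d * (1 + Y) + S + (d * Y + S) = d + ((d*Y)+(d*Y)) + (S+S)"
    by (simp only: algebra_simps mult_1_left mult_1_right)
  thus ?thesis by (simp only: bit_add_self add_0_right)
qed

lemma bit_arith2: "(e::bit) * (1 + Y) + e * Y = e"
proof -
  have "e * (1 + Y) + e * Y = e + ((e*Y)+(e*Y))"
    by (simp only: algebra_simps mult_1_left mult_1_right)
  thus ?thesis by (simp only: bit_add_self add_0_right)
qed

lemma block_cols:
  fixes z d0 :: bit and xv yv d' cv :: "nat \<Rightarrow> bit" and Am :: "nat \<Rightarrow> nat \<Rightarrow> bit"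
  assumes inv: "mat_invertible k Am"
    and xv: "\<forall>l<k. xv l = (\<Sum>i<k. cv i * Am i l)"
    and z: "z = 1 + (\<Sum>i<k. cv i * yv i)"
    and r0: "d0 * z + (\<Sum>q<k. d' q * xv q) = 0"
    and ri: "\<forall>i<k. d0 * yv i + (\<Sum>q<k. d' q * Am i q) = 0"
  shows "d0 = 0 \<and> (\<forall>q<k. d' q = 0)"
proof -
  have S: "(\<Sum>q<k. d' q * xv q) = (\<Sum>i<k. cv i * (\<Sum>q<k. d' q * Am i q))"
  proof -
    have "(\<Sum>q<k. d' q * xv q) = (\<Sum>q<k. d' q * (\<Sum>i<k. cv i * Am i q))"
      using xv by (intro sum.cong) auto
    also have "\<dots> = (\<Sum>q<k. \<Sum>i<k. cv i * (d' q * Am i q))"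
      by (simp only: sum_distrib_left mult.left_commute)
    also have "\<dots> = (\<Sum>i<k. \<Sum>q<k. cv i * (d' q * Am i q))"
      by (rule sum.swap)
    also have "\<dots> = (\<Sum>i<k. cv i * (\<Sum>q<k. d' q * Am i q))"
      by (simp only: sum_distrib_left)
    finally show ?thesis .
  qed
  have "(\<Sum>i<k. cv i * (d0 * yv i + (\<Sum>q<k. d' q * Am i q))) = 0"
    using ri by simp
  moreover have "(\<Sum>i<k. cv i * (d0 * yv i + (\<Sum>q<k. d' q * Am i q)))
      = (\<Sum>i<k. d0 * (cv i * yv i) + cv i * (\<Sum>q<k. d' q * Am i q))"
    by (intro sum.cong) (auto simp only: distrib_left mult.left_commute)
  moreover have "\<dots> = d0 * (\<Sum>i<k. cv i * yv i) + (\<Sum>i<k. cv i * (\<Sum>q<k. d' q * Am i q))"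
    by (simp only: sum.distrib sum_distrib_left)
  ultimately have T: "d0 * (\<Sum>i<k. cv i * yv i) + (\<Sum>q<k. d' q * xv q) = 0"
    unfolding S by simp
  have "d0 * z + (\<Sum>q<k. d' q * xv q) + (d0 * (\<Sum>i<k. cv i * yv i) + (\<Sum>q<k. d' q * xv q)) = d0"
    unfolding z by (rule bit_arith1)
  hence "d0 = 0 + 0" by (simp only: r0 T)
  hence d0: "d0 = 0" by (simp only: add_0)
  obtain B where B: "\<forall>i<k. \<forall>l<k. (\<Sum>m<k. B i m * Am m l) = (if i = l then 1 else 0)"
    using inv unfolding mat_invertible_def by blast
  have A0: "\<forall>i<k. (\<Sum>q<k. d' q * Am i q) = 0" using ri d0 by simp
  have "\<forall>l<k. d' l = 0"
  proof (intro allI impI)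
    fix l assume l: "l < k"
    have "(\<Sum>q<k. (\<Sum>m<k. B l m * Am m q) * d' q) = (\<Sum>q<k. (if l = q then d' q else 0))"
      using B l by (intro sum.cong) auto
    also have "\<dots> = d' l" using l by simp
    finally have e: "d' l = (\<Sum>q<k. (\<Sum>m<k. B l m * Am m q) * d' q)" by simp
    also have "\<dots> = (\<Sum>m<k. B l m * (\<Sum>q<k. d' q * Am m q))"
      by (rule swap_gen2)
    also have "\<dots> = 0" using A0 by simp
    finally show "d' l = 0" .
  qed
  with d0 show ?thesis by simp
qed

lemma block_rows:
  fixes z e0 :: bit and xv yv e' cv :: "nat \<Rightarrow> bit" and Am :: "nat \<Rightarrow> nat \<Rightarrow> bit"
  assumes inv: "mat_invertible k Am"
    and xv: "\<forall>l<k. xv l = (\<Sum>i<k. cv i * Am i l)"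
    and z: "z = 1 + (\<Sum>i<k. cv i * yv i)"
    and c0: "e0 * z + (\<Sum>i<k. e' i * yv i) = 0"
    and cp: "\<forall>p<k. e0 * xv p + (\<Sum>i<k. e' i * Am i p) = 0"
  shows "e0 = 0 \<and> (\<forall>i<k. e' i = 0)"
proof -
  define w where "w i = e0 * cv i + e' i" for i
  have W: "\<forall>p<k. (\<Sum>i<k. w i * Am i p) = 0"
  proof (intro allI impI)
    fix p assume p: "p < k"
    have "(\<Sum>i<k. w i * Am i p) = (\<Sum>i<k. e0 * (cv i * Am i p) + e' i * Am i p)"
      unfolding w_def by (simp only: distrib_right mult.assoc)
    also have "\<dots> = e0 * xv p + (\<Sum>i<k. e' i * Am i p)"
      using xv p by (simp only: sum.distrib sum_distrib_left[symmetric])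
    also have "\<dots> = 0" using cp p by blast
    finally show "(\<Sum>i<k. w i * Am i p) = 0" .
  qed
  obtain B where B: "\<forall>i<k. \<forall>l<k. (\<Sum>m<k. Am i m * B m l) = (if i = l then 1 else 0)"
    using inv unfolding mat_invertible_def by blast
  have w0: "\<forall>l<k. w l = 0"
  proof (intro allI impI)
    fix l assume l: "l < k"
    have "(\<Sum>i<k. w i * (\<Sum>m<k. Am i m * B m l)) = (\<Sum>i<k. (if i = l then w i else 0))"
      using B l by (intro sum.cong) auto
    also have "\<dots> = w l" using l by simp
    finally have "w l = (\<Sum>i<k. w i * (\<Sum>m<k. Am i m * B m l))" by simp
    also have "\<dots> = (\<Sum>m<k. (\<Sum>i<k. w i * Am i m) * B m l)"
      by (rule swap_gen)
    also have "\<dots> = 0" using W by simp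
    finally show "w l = 0" .
  qed
  have e': "\<forall>i<k. e' i = e0 * cv i"
    using w0 unfolding w_def by (metis add.commute add_0 bit_add_self2)
  have "(\<Sum>i<k. e' i * yv i) = e0 * (\<Sum>i<k. cv i * yv i)"
  proof -
    have "(\<Sum>i<k. e' i * yv i) = (\<Sum>i<k. e0 * (cv i * yv i))"
      using e' by (intro sum.cong) (auto simp only: mult.assoc)
    thus ?thesis by (simp only: sum_distrib_left)
  qed
  hence "e0 * z + e0 * (\<Sum>i<k. cv i * yv i) = 0" using c0 by (simp only:)
  hence "e0 = 0" unfolding z bit_arith2 .
  with e' show ?thesis by simp
qed

lemma Gval:
  assumes "p < k + 1"
  shows "ext_gen k z x y A r (j * (k + 1) + p) =
    (if r = 0 then (if p = 0 then z j else x j (p - 1))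
     else (if p = 0 then y (r - 1) j else A j (r - 1) (p - 1)))"
proof -
  have "(j * (k + 1) + p) div (k + 1) = j"
    using assms by (metis Euclidean_Rings.div_eq_0_iff add.commute div_mult_self3
    nat.simps(3) nat_arith.rule0 plus_1_eq_Suc)
  moreover have "(j * (k + 1) + p) mod (k + 1) = p"
    using assms by (metis mod_mult_self3 mod_less)
  ultimately have "(j * (k + 1) + p) div (k + 1) = j" "(j * (k + 1) + p) mod (k + 1) = p" by auto
  thus ?thesis unfolding ext_gen_def Let_def by (simp only:)
qed

theorem proposition5:
  fixes t k :: nat
    and A :: "nat \<Rightarrow> nat \<Rightarrow> nat \<Rightarrow> bit"
    and x :: "nat \<Rightarrow> nat \<Rightarrow> bit"
    and y :: "nat \<Rightarrow> nat \<Rightarrow> bit"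
    and c :: "nat \<Rightarrow> nat \<Rightarrow> bit"
  assumes "t \<ge> 2" and "k \<ge> 1"
    and "\<forall>j<t. mat_invertible k (A j)"
    and "CIS_code t k (block_gen k A)"
    and "\<forall>j<t. \<forall>l<k. x j l = (\<Sum>i<k. c i j * A j i l)"
  shows "CIS_code t (k + 1)
           (ext_gen k (\<lambda>j. 1 + (\<Sum>i<k. c i j * y i j)) x y A)"
proof -
  define z where "z = (\<lambda>j. 1 + (\<Sum>i<k. c i j * y i j))"
  define G where "G = ext_gen k z x y A"
  define I where "I j = (\<lambda>p. j * (k + 1) + p) ` {..<k+1}" for j
  have inv: "\<And>j. j < t \<Longrightarrow> mat_invertible k (A j)" using assms(3) by blast
  have xj: "\<And>j. j < t \<Longrightarrow> \<forall>l<k. x j l = (\<Sum>i<k. c i j * A j i l)" using assms(5) by blast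
  have zj: "\<And>j. z j = 1 + (\<Sum>i<k. c i j * y i j)" unfolding z_def by simp
  have GV: "\<And>j p r. p < k + 1 \<Longrightarrow> G r (j * (k + 1) + p) =
    (if r = 0 then (if p = 0 then z j else x j (p - 1))
     else (if p = 0 then y (r - 1) j else A j (r - 1) (p - 1)))"
    unfolding G_def by (rule Gval)
  have Gz: "G 0 (j*(k+1)) = z j" for j using GV[where j=j and p=0 and r=0] by simp
  have Gy: "G (Suc i) (j*(k+1)) = y i j" for i j using GV[where j=j and p=0 and r="Suc i"] by simp
  have Gx: "q < k \<Longrightarrow> G 0 (j*(k+1) + Suc q) = x j q" for j q using GV[where j=j and p="Suc q" and r=0] by simp
  have GA: "q < k \<Longrightarrow> G (Suc i) (j*(k+1) + Suc q) = A j i q" for i j q using GV[where j=j and p="Suc q" and r="Suc i"] by simp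
  have Gz0: "G 0 0 = z 0" using Gz[of 0] by simp
  have Gy0: "\<And>i. G (Suc i) 0 = y i 0" using Gy[of _ 0] by simp
  have Gx0: "\<And>q. q < k \<Longrightarrow> G 0 (Suc q) = x 0 q" using Gx[of _ 0] by simp
  have GA0: "\<And>i q. q < k \<Longrightarrow> G (Suc i) (Suc q) = A 0 i q" using GA[of _ _ 0] by simp
  have rows: "rows_indep (k + 1) (t * (k + 1)) G"
    unfolding rows_indep_def
  proof (intro allI impI)
    fix e :: "nat \<Rightarrow> bit" and i
    assume H: "\<forall>l<t * (k + 1). (\<Sum>i<k + 1. e i * G i l) = 0" and i: "i < k + 1"
    have t0: "0 < t" using assms(1) by simp
    have col: "\<And>p. p < k + 1 \<Longrightarrow> (\<Sum>i<k + 1. e i * G i p) = 0"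
    proof -
      fix p assume "p < k + 1"
      moreover have "k + 1 \<le> t * (k + 1)" using t0 by (metis bot_nat_0.not_eq_extremum comm_monoid_mult_class.mult_1 less_one
    mult_le_mono1 verit_comp_simplify1(3))
      ultimately show "(\<Sum>i<k + 1. e i * G i p) = 0" using H by simp
    qed
    have c0: "e 0 * z 0 + (\<Sum>i<k. e (Suc i) * y i 0) = 0"
    proof -
      have "(\<Sum>i<k + 1. e i * G i 0) = 0" by (rule col) simp
      hence "e 0 * G 0 0 + (\<Sum>i<k. e (Suc i) * G (Suc i) 0) = 0"
        by (simp only: Suc_eq_plus1[symmetric] sum.lessThan_Suc_shift)
      thus ?thesis by (simp only: Gz0 Gy0)
    qed
    have cp: "\<forall>p<k. e 0 * x 0 p + (\<Sum>i<k. e (Suc i) * A 0 i p) = 0"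
    proof (intro allI impI)
      fix p assume p: "p < k"
      have "(\<Sum>i<k + 1. e i * G i (Suc p)) = 0" by (rule col) (use p in simp)
      hence "e 0 * G 0 (Suc p) + (\<Sum>i<k. e (Suc i) * G (Suc i) (Suc p)) = 0"
        by (simp only: Suc_eq_plus1[symmetric] sum.lessThan_Suc_shift)
      thus "e 0 * x 0 p + (\<Sum>i<k. e (Suc i) * A 0 i p) = 0" by (simp only: Gx0[OF p] GA0[OF p])
    qed
    have "e 0 = 0 \<and> (\<forall>i<k. e (Suc i) = 0)"
      by (rule block_rows[OF inv[OF t0] xj[OF t0] zj c0 cp])
    thus "e i = 0" using i by (cases i) auto
  qed
  have info: "info_set (k + 1) (t * (k + 1)) G (I j)" if j: "j < t" for j
  proof -
    have injI: "inj_on (\<lambda>p. j * (k + 1) + p) {..<k+1}" by (simp add: inj_on_def)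
    have sub: "I j \<subseteq> {..<t * (k + 1)}"
    proof
      fix l assume "l \<in> I j"
      then obtain p where p: "p < k + 1" "l = j * (k + 1) + p" unfolding I_def by auto
      have "j * (k + 1) + p < (j + 1) * (k + 1)" using p by simp
      also have "\<dots> \<le> t * (k + 1)" using j by (intro mult_right_mono) auto
      finally show "l \<in> {..<t * (k + 1)}" using p by simp
    qed
    have card: "card (I j) = k + 1" unfolding I_def using card_image[OF injI] by simp
    have ci: "cols_indep (k + 1) G (I j)"
      unfolding cols_indep_def
    proof (intro allI impI ballI)
      fix d :: "nat \<Rightarrow> bit" and l
      assume H: "\<forall>i<k + 1. (\<Sum>l\<in>I j. d l * G i l) = 0" and l: "l \<in> I j"
      define b where "b = j * (k + 1)"
      have re: "\<And>i. (\<Sum>l\<in>I j. d l * G i l) = (\<Sum>p<k + 1. d (b + p) * G i (b + p))"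
        unfolding I_def b_def by (simp only: sum.reindex[OF injI] o_def)
      have r0: "d b * z j + (\<Sum>q<k. d (b + Suc q) * x j q) = 0"
      proof -
        have "(\<Sum>p<k + 1. d (b + p) * G 0 (b + p)) = 0" using H re[of 0] by (simp only:)
        hence "d (b + 0) * G 0 (b + 0) + (\<Sum>q<k. d (b + Suc q) * G 0 (b + Suc q)) = 0"
          by (simp only: Suc_eq_plus1[symmetric] sum.lessThan_Suc_shift)
        moreover have "G 0 b = z j" unfolding b_def by (rule Gz)
        moreover have "(\<Sum>q<k. d (b + Suc q) * G 0 (b + Suc q)) = (\<Sum>q<k. d (b + Suc q) * x j q)"
          by (intro sum.cong refl, unfold lessThan_iff b_def, simp only: Gx)
        ultimately show ?thesis by (simp only: add_0_right)
      qed
      have ri: "\<forall>i<k. d b * y i j + (\<Sum>q<k. d (b + Suc q) * A j i q) = 0"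
      proof (intro allI impI)
        fix i assume i: "i < k"
        have "(\<Sum>p<k + 1. d (b + p) * G (Suc i) (b + p)) = 0" using H re[of "Suc i"] i by (simp only:)
        hence "d (b + 0) * G (Suc i) (b + 0) + (\<Sum>q<k. d (b + Suc q) * G (Suc i) (b + Suc q)) = 0"
          by (simp only: Suc_eq_plus1[symmetric] sum.lessThan_Suc_shift)
        moreover have "G (Suc i) b = y i j" unfolding b_def by (rule Gy)
        moreover have "(\<Sum>q<k. d (b + Suc q) * G (Suc i) (b + Suc q)) = (\<Sum>q<k. d (b + Suc q) * A j i q)"
          by (intro sum.cong refl, unfold lessThan_iff b_def, simp only: GA)
        ultimately show "d b * y i j + (\<Sum>q<k. d (b + Suc q) * A j i q) = 0"
          by (simp only: add_0_right)
      qed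
      have "d b = 0 \<and> (\<forall>q<k. d (b + Suc q) = 0)"
        by (rule block_cols[OF inv[OF j] xj[OF j] zj r0 ri])
      moreover obtain p where p: "p < k + 1" "l = b + p" using l unfolding I_def b_def by auto
      ultimately show "d l = 0" by (cases p) auto
    qed
    show ?thesis unfolding info_set_def using sub card ci by blast
  qed
  have disj: "I j \<inter> I j' = {}" if "j \<noteq> j'" for j j'
  proof (rule ccontr)
    assume "I j \<inter> I j' \<noteq> {}"
    then obtain p p' where "p < k + 1" "p' < k + 1" "j * (k + 1) + p = j' * (k + 1) + p'"
      unfolding I_def by auto
    hence "(j * (k + 1) + p) div (k + 1) = (j' * (k + 1) + p') div (k + 1)" by simp
    hence "j = j'" using \<open>p < k + 1\<close> \<open>p' < k + 1\<close>
      by (metis Euclidean_Rings.div_eq_0_iff add.commute div_mult_self3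
          nat.simps(3) nat_arith.rule0 plus_1_eq_Suc)
    thus False using that by simp
  qed
  have un: "(\<Union>j<t. I j) = {..<t * (k + 1)}"
  proof
    show "(\<Union>j<t. I j) \<subseteq> {..<t * (k + 1)}" using info unfolding info_set_def by blast
  next
    show "{..<t * (k + 1)} \<subseteq> (\<Union>j<t. I j)"
    proof
      fix l assume "l \<in> {..<t * (k + 1)}"
      hence l: "l < t * (k + 1)" by simp
      have "l div (k + 1) < t" using l by (simp add: less_mult_imp_div_less)
      moreover have "l \<in> I (l div (k + 1))"
        unfolding I_def image_iff
        by (rule bexI[of _ "l mod (k + 1)"]) (simp_all only: div_mult_mod_eq lessThan_iff mod_less_divisor zero_less_Suc Suc_eq_plus1[symmetric])
      ultimately show "l \<in> (\<Union>j<t. I j)" by blast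
    qed
  qed
  have "CIS_code t (k + 1) G"
    unfolding CIS_code_def using rows info disj un by blast
  thus ?thesis unfolding G_def z_def .
qed

end
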